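(* Let $d\geq 2$ be a fixed integer. For all positive integers $n$ and $k \leq n^{(d-1)/d}\cdot (5d)^{1/d-2}$, there is a set of $n$ points in $\mathbb{R}^d$ such that every geometric spanner of tree-width $k$ on this set has dilation $\Omega (n/k^{d/(d-1)})$.
   Context: A geometric spanner on a point set $P\subset\mathbb{R}^d$ is a graph $G$ with vertex set $P$ in which each edge is weighted by the Euclidean distance between its endpoints. Its dilation is $\max\{ d_G(p,p')/|pp'| : p\neq p'\in P\}$, where $d_G$ is the shortest-path distance in $G$ and $|pp'|$ the Euclidean distance. Asymptotic notation is with $d$ fixed. *)

theory Defs
  imports "HOL-Analysis.Analysis"
begin

fun is_walk :: "'a set set \<Rightarrow> 'a list \<Rightarrow> bool" where
  "is_walk E [] = False"
| "is_walk E [x] = True"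
| "is_walk E (x # y # xs) = ({x, y} \<in> E \<and> is_walk E (y # xs))"

definition connected_in :: "'a set set \<Rightarrow> 'a set \<Rightarrow> bool" where
  "connected_in E V \<longleftrightarrow> (\<forall>x\<in>V. \<forall>y\<in>V. \<exists>xs. is_walk E xs \<and> set xs \<subseteq> V \<and> hd xs = x \<and> last xs = y)"

definition simple_edges :: "'a set \<Rightarrow> 'a set set" where
  "simple_edges V = {{p, q} | p q. p \<in> V \<and> q \<in> V \<and> p \<noteq> q}"

definition is_tree :: "nat set \<Rightarrow> nat set set \<Rightarrow> bool" where
  "is_tree I F \<longleftrightarrow> finite I \<and> I \<noteq> {} \<and> F \<subseteq> simple_edges I \<and> connected_in F I
      \<and> card F = card I - 1"

definition tree_decomposition ::
  "'a set \<Rightarrow> 'a set set \<Rightarrow> nat set \<Rightarrow> nat set set \<Rightarrow> (nat \<Rightarrow> 'a set) \<Rightarrow> bool" where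
  "tree_decomposition V E I F B \<longleftrightarrow> is_tree I F
      \<and> (\<forall>i\<in>I. B i \<subseteq> V)
      \<and> (\<forall>v\<in>V. \<exists>i\<in>I. v \<in> B i)
      \<and> (\<forall>e\<in>E. \<exists>i\<in>I. e \<subseteq> B i)
      \<and> (\<forall>v\<in>V. connected_in F {i\<in>I. v \<in> B i})"

definition has_td_width :: "'a set \<Rightarrow> 'a set set \<Rightarrow> nat \<Rightarrow> bool" where
  "has_td_width V E k \<longleftrightarrow> (\<exists>I F B. tree_decomposition V E I F B \<and> (\<forall>i\<in>I. card (B i) \<le> k + 1))"

definition treewidth :: "'a set \<Rightarrow> 'a set set \<Rightarrow> nat" where
  "treewidth V E = (LEAST k. has_td_width V E k)"

fun walk_len :: "'a::metric_space list \<Rightarrow> real" where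
  "walk_len [] = 0"
| "walk_len [x] = 0"
| "walk_len (x # y # xs) = dist x y + walk_len (y # xs)"

definition graph_dist :: "'a::metric_space set set \<Rightarrow> 'a \<Rightarrow> 'a \<Rightarrow> ereal" where
  "graph_dist E p q = (INF xs\<in>{xs. is_walk E xs \<and> hd xs = p \<and> last xs = q}. ereal (walk_len xs))"

definition geometric_graph :: "'a set \<Rightarrow> 'a set set \<Rightarrow> bool" where
  "geometric_graph P E \<longleftrightarrow> E \<subseteq> simple_edges P"

definition dilation :: "'a::metric_space set \<Rightarrow> 'a set set \<Rightarrow> ereal" where
  "dilation P E = (SUP pq\<in>{(p, q). p \<in> P \<and> q \<in> P \<and> p \<noteq> q}.
                     graph_dist E (fst pq) (snd pq) / ereal (dist (fst pq) (snd pq)))"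

end

theory Submission
  imports Defs
begin

definition erel :: "'a set set \<Rightarrow> 'a set \<Rightarrow> ('a \<times> 'a) set" where
  "erel E V = {(a,b). {a,b} \<in> E \<and> a \<in> V \<and> b \<in> V}"

lemma erel_sym: "(a,b) \<in> erel E V \<Longrightarrow> (b,a) \<in> erel E V"
  by (auto simp: erel_def insert_commute)

lemma erel_conv: "(erel E V)\<inverse> = erel E V"
  using erel_sym by auto

lemma erel_rtrancl_sym: "(a,b) \<in> (erel E V)\<^sup>* \<Longrightarrow> (b,a) \<in> (erel E V)\<^sup>*"
  by (metis erel_conv rtrancl_converseI)

lemma erel_mono: "E \<subseteq> E' \<Longrightarrow> V \<subseteq> V' \<Longrightarrow> erel E V \<subseteq> erel E' V'"
  by (auto simp: erel_def)

lemma walk_nonempty: "is_walk E xs \<Longrightarrow> xs \<noteq> []"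
  by (cases xs) auto

lemma walk_to_rtrancl: "is_walk E xs \<Longrightarrow> set xs \<subseteq> V \<Longrightarrow> (hd xs, last xs) \<in> (erel E V)\<^sup>*"
proof (induction E xs rule: is_walk.induct)
  case (3 E x y xs)
  then have "(x,y) \<in> erel E V" by (auto simp: erel_def)
  moreover have "(y, last (y#xs)) \<in> (erel E V)\<^sup>*" using 3 by auto
  ultimately show ?case by (auto intro: converse_rtrancl_into_rtrancl)
qed auto

lemma rtrancl_to_walk:
  assumes "(x,y) \<in> (erel E V)\<^sup>*" "x \<in> V"
  shows "\<exists>xs. is_walk E xs \<and> set xs \<subseteq> V \<and> hd xs = x \<and> last xs = y"
  using assms
proof (induction rule: converse_rtrancl_induct)
  case base
  then show ?case by (intro exI[of _ "[y]"]) auto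
next
  case (step x z)
  then have z: "z \<in> V" "{x,z} \<in> E" by (auto simp: erel_def)
  then obtain xs where xs: "is_walk E xs" "set xs \<subseteq> V" "hd xs = z" "last xs = y" using step by auto
  then obtain rest where "xs = z # rest" by (cases xs) auto
  then show ?case using xs z step.prems
    by (intro exI[of _ "x # xs"]) auto
qed

lemma connected_in_iff: "connected_in E V \<longleftrightarrow> (\<forall>x\<in>V. \<forall>y\<in>V. (x,y) \<in> (erel E V)\<^sup>*)"
  unfolding connected_in_def
  by (metis rtrancl_to_walk walk_to_rtrancl)

lemma finite_simple_edges: "finite V \<Longrightarrow> finite (simple_edges V)"
proof -
  assume "finite V"
  have "simple_edges V \<subseteq> Pow V" by (auto simp: simple_edges_def)
  then show ?thesis using \<open>finite V\<close> finite_subset by blast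
qed

lemma conn_card:
  assumes "finite V" "F \<subseteq> simple_edges V" "r \<in> V" "\<forall>y\<in>V. (r,y) \<in> (erel F V)\<^sup>*"
  shows "card V \<le> card F + 1"
proof -
  define R where "R = erel F V"
  have finF: "finite F" using assms finite_simple_edges finite_subset by blast
  define dd where "dd y = (LEAST n. (r,y) \<in> R ^^ n)" for y
  have ddR: "(r,y) \<in> R ^^ dd y" if "y \<in> V" for y
  proof -
    have "\<exists>n. (r,y) \<in> R ^^ n" using assms(4) that rtrancl_power R_def by blast
    then show ?thesis unfolding dd_def by (rule LeastI_ex)
  qed
  have ddle: "dd y \<le> n" if "(r,y) \<in> R ^^ n" for y n
    unfolding dd_def using that by (rule Least_le)
  have pred: "\<exists>u. (u,y) \<in> R \<and> dd u + 1 = dd y" if "y \<in> V" "y \<noteq> r" for y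
  proof -
    have "dd y \<noteq> 0" using ddR[OF that(1)] that(2) by (cases "dd y") auto
    then obtain p where p: "dd y = Suc p" by (cases "dd y") auto
    then have "(r,y) \<in> R ^^ Suc p" using ddR[OF that(1)] by simp
    then obtain u where u: "(r,u) \<in> R ^^ p" "(u,y) \<in> R" by (rule relpow_Suc_E)
    have "dd u \<le> p" using ddle u(1) by blast
    moreover have "u \<in> V" using u(2) by (auto simp: R_def erel_def)
    then have "(r,y) \<in> R ^^ Suc (dd u)" using ddR u(2) by auto
    then have "dd y \<le> Suc (dd u)" using ddle by blast
    ultimately show ?thesis using u p by (intro exI[of _ u]) auto
  qed
  define uu where "uu y = (SOME u. (u,y) \<in> R \<and> dd u + 1 = dd y)" for y
  have uu: "(uu y, y) \<in> R \<and> dd (uu y) + 1 = dd y" if "y \<in> V" "y \<noteq> r" for y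
    unfolding uu_def using pred[OF that] by (rule someI_ex)
  define f where "f y = {uu y, y}" for y
  have "f y \<in> F" if "y \<in> V - {r}" for y
  proof -
    have "(uu y, y) \<in> erel F V" using uu[of y] that unfolding R_def by blast
    then show ?thesis unfolding f_def erel_def by blast
  qed
  then have "f ` (V - {r}) \<subseteq> F" by blast
  moreover have "inj_on f (V - {r})"
  proof
    fix x y assume xy: "x \<in> V - {r}" "y \<in> V - {r}" "f x = f y"
    show "x = y"
    proof (rule ccontr)
      assume "x \<noteq> y"
      then have e: "uu y = x" "uu x = y" using xy(3) unfolding f_def by (auto simp: doubleton_eq_iff)
      have "dd (uu x) + 1 = dd x" "dd (uu y) + 1 = dd y" using uu[of x] uu[of y] xy by auto
      then have "dd y + 1 = dd x" "dd x + 1 = dd y" unfolding e by auto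
      then show False by linarith
    qed
  qed
  ultimately have "card (V - {r}) \<le> card F"
    using card_inj_on_le finF by blast
  then show ?thesis using assms(3) assms(1) by auto
qed

lemma tree_bridge:
  assumes tr: "is_tree I F" and e: "{i,j} \<in> F"
  shows "(i,j) \<notin> (erel (F - {{i,j}}) I)\<^sup>*"
proof
  assume ij: "(i,j) \<in> (erel (F - {{i,j}}) I)\<^sup>*"
  define F' where "F' = F - {{i,j}}"
  have fin: "finite I" "I \<noteq> {}" "F \<subseteq> simple_edges I" "connected_in F I" "card F = card I - 1"
    using tr by (auto simp: is_tree_def)
  have finF: "finite F" using fin finite_simple_edges finite_subset by blast
  have sub: "erel F I \<subseteq> (erel F' I)\<^sup>*"
  proof
    fix p assume "p \<in> erel F I"
    then obtain a b where p: "p = (a,b)" "{a,b} \<in> F" "a \<in> I" "b \<in> I" by (auto simp: erel_def)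
    show "p \<in> (erel F' I)\<^sup>*"
    proof (cases "{a,b} = {i,j}")
      case True
      then have "(a = i \<and> b = j) \<or> (a = j \<and> b = i)" by (auto simp: doubleton_eq_iff)
      moreover have "(i,j) \<in> (erel F' I)\<^sup>*" "(j,i) \<in> (erel F' I)\<^sup>*"
        using ij erel_rtrancl_sym[OF ij] unfolding F'_def by auto
      ultimately show ?thesis using p(1) by auto
    next
      case False
      then show ?thesis using p by (auto simp: F'_def erel_def)
    qed
  qed
  obtain r where r: "r \<in> I" using fin by auto
  have "\<forall>y\<in>I. (r,y) \<in> (erel F' I)\<^sup>*"
  proof
    fix y assume "y \<in> I"
    then have "(r,y) \<in> (erel F I)\<^sup>*" using fin(4) r by (auto simp: connected_in_iff)
    then show "(r,y) \<in> (erel F' I)\<^sup>*" using rtrancl_subset_rtrancl[OF sub] by blast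
  qed
  then have "card I \<le> card F' + 1"
    using conn_card[of I F' r] fin r unfolding F'_def by auto
  moreover have "card F' = card F - 1" unfolding F'_def using e finF by auto
  moreover have "card F \<ge> 1" using e finF by (metis card_0_eq empty_iff less_one not_le)
  moreover have "card I \<ge> 1" using fin by (simp add: Suc_leI card_gt_0_iff)
  ultimately show False using fin(5) by linarith
qed

definition side :: "nat set set \<Rightarrow> nat set \<Rightarrow> nat \<Rightarrow> nat \<Rightarrow> nat set" where
  "side F I i j = {x \<in> I. (j,x) \<in> (erel (F - {{i,j}}) I)\<^sup>*}"

lemma sides_disjoint:
  assumes "is_tree I F" "{i,j} \<in> F"
  shows "side F I i j \<inter> side F I j i = {}"
proof (rule ccontr)
  assume "side F I i j \<inter> side F I j i \<noteq> {}"
  then obtain x where "(j,x) \<in> (erel (F - {{i,j}}) I)\<^sup>*" "(i,x) \<in> (erel (F - {{i,j}}) I)\<^sup>*"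
    unfolding side_def by (auto simp: insert_commute)
  then have "(i,j) \<in> (erel (F - {{i,j}}) I)\<^sup>*"
    by (meson erel_rtrancl_sym rtrancl_trans)
  then show False using tree_bridge assms by blast
qed

lemma first_hit:
  assumes "(a,i) \<in> R\<^sup>*" "a \<noteq> i"
  shows "\<exists>j. (a,j) \<in> (R \<inter> {(x,y). x \<noteq> i \<and> y \<noteq> i})\<^sup>* \<and> (j,i) \<in> R"
  using assms
proof (induction rule: converse_rtrancl_induct)
  case base
  then show ?case by simp
next
  case (step a a')
  show ?case
  proof (cases "a' = i")
    case True
    then show ?thesis using step by auto
  next
    case False
    then obtain j where j: "(a',j) \<in> (R \<inter> {(x,y). x \<noteq> i \<and> y \<noteq> i})\<^sup>*" "(j,i) \<in> R"
      using step by auto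
    have "(a,a') \<in> R \<inter> {(x,y). x \<noteq> i \<and> y \<noteq> i}" using step False by auto
    then show ?thesis using j by (meson converse_rtrancl_into_rtrancl)
  qed
qed

lemma td_bags_conn:
  assumes td: "tree_decomposition V E I F B" and X: "X \<subseteq> V" "X \<inter> B i = {}"
    and cX: "connected_in E X" and a: "a \<in> I" "B a \<inter> X \<noteq> {}" and b: "b \<in> I" "B b \<inter> X \<noteq> {}"
  shows "(a,b) \<in> (erel F (I - {i}))\<^sup>*"
proof -
  define Ri where "Ri = erel F (I - {i})"
  have bag: "(l1,l2) \<in> Ri\<^sup>*" if "v \<in> X" "l1 \<in> I" "l2 \<in> I" "v \<in> B l1" "v \<in> B l2" for v l1 l2
  proof -
    have "connected_in F {l\<in>I. v \<in> B l}" using td that X unfolding tree_decomposition_def by auto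
    then have "(l1,l2) \<in> (erel F {l\<in>I. v \<in> B l})\<^sup>*" using that by (auto simp: connected_in_iff)
    moreover have "erel F {l\<in>I. v \<in> B l} \<subseteq> Ri" unfolding Ri_def
      using that X by (intro erel_mono) auto
    ultimately show ?thesis using rtrancl_mono by blast
  qed
  obtain u where u: "u \<in> B a" "u \<in> X" using a by auto
  obtain w where w: "w \<in> B b" "w \<in> X" using b by auto
  have "(u,w) \<in> (erel E X)\<^sup>*" using cX u w by (auto simp: connected_in_iff)
  then have "\<forall>b\<in>I. w \<in> B b \<longrightarrow> (a,b) \<in> Ri\<^sup>*"
  proof (induction rule: rtrancl_induct)
    case base
    then show ?case using bag u a by blast
  next
    case (step w w')
    then have e: "{w,w'} \<in> E" "w \<in> X" "w' \<in> X" by (auto simp: erel_def)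
    then obtain l where l: "l \<in> I" "{w,w'} \<subseteq> B l" using td unfolding tree_decomposition_def by blast
    then have "(a,l) \<in> Ri\<^sup>*" using step by auto
    then show ?case using bag[of w' l] l e by (meson insert_subset rtrancl_trans)
  qed
  then show ?thesis using w b Ri_def by blast
qed

lemma td_orient:
  assumes td: "tree_decomposition V E I F B" and X: "X \<subseteq> V" "X \<inter> B i = {}" "X \<noteq> {}"
    and cX: "connected_in E X" and i: "i \<in> I"
  shows "\<exists>j. {i,j} \<in> F \<and> {l\<in>I. B l \<inter> X \<noteq> {}} \<subseteq> side F I i j"
proof -
  have tr: "is_tree I F" using td by (auto simp: tree_decomposition_def)
  obtain x where x: "x \<in> X" using X by auto
  then obtain a where a: "a \<in> I" "x \<in> B a" using X td unfolding tree_decomposition_def by blast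
  have ai: "a \<noteq> i" using a x X by auto
  have "(a,i) \<in> (erel F I)\<^sup>*" using tr a i by (auto simp: is_tree_def connected_in_iff)
  then obtain j where j: "(a,j) \<in> (erel F I \<inter> {(x,y). x \<noteq> i \<and> y \<noteq> i})\<^sup>*" "(j,i) \<in> erel F I"
    using first_hit[OF _ ai] by blast
  have "{j,i} \<in> F" using j(2) unfolding erel_def by blast
  then have ij: "{i,j} \<in> F" by (metis insert_commute)
  define F' where "F' = F - {{i,j}}"
  have s1: "erel F I \<inter> {(x,y). x \<noteq> i \<and> y \<noteq> i} \<subseteq> erel F' I"
  proof (clarify)
    fix x y assume "(x,y) \<in> erel F I" "x \<noteq> i" "y \<noteq> i"
    moreover have "{x,y} \<noteq> {i,j}" using \<open>x \<noteq> i\<close> \<open>y \<noteq> i\<close> by blast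
    ultimately show "(x,y) \<in> erel F' I" unfolding erel_def F'_def by blast
  qed
  have s2: "erel F (I - {i}) \<subseteq> erel F' I"
  proof (clarify)
    fix x y assume a: "(x,y) \<in> erel F (I - {i})"
    then have "x \<noteq> i" "y \<noteq> i" unfolding erel_def by auto
    then have "{x,y} \<noteq> {i,j}" by blast
    then show "(x,y) \<in> erel F' I" using a unfolding erel_def F'_def by blast
  qed
  have "(a,j) \<in> (erel F' I)\<^sup>*" using rtrancl_mono[OF s1] j(1) by (rule subsetD)
  then have ja: "(j,a) \<in> (erel F' I)\<^sup>*" by (rule erel_rtrancl_sym)
  have "b \<in> side F I i j" if "b \<in> I" "B b \<inter> X \<noteq> {}" for b
  proof -
    have "(a,b) \<in> (erel F (I - {i}))\<^sup>*"
      using td_bags_conn[OF td X(1,2) cX a(1) _ that] a x by auto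
    then have "(a,b) \<in> (erel F' I)\<^sup>*" by (rule subsetD[OF rtrancl_mono[OF s2]])
    then have "(j,b) \<in> (erel F' I)\<^sup>*" using ja by (rule rtrancl_trans[rotated])
    then show ?thesis using that unfolding side_def F'_def by blast
  qed
  then have "{l\<in>I. B l \<inter> X \<noteq> {}} \<subseteq> side F I i j" by blast
  then show ?thesis using ij by (intro exI[of _ j] conjI)
qed

lemma td_separator:
  assumes td: "tree_decomposition V E I F B" and finV: "finite V"
  shows "\<exists>i\<in>I. \<forall>X. X \<subseteq> V - B i \<and> connected_in E X \<longrightarrow> 2 * card X \<le> card V"
proof (rule ccontr)
  assume "\<not> ?thesis"
  then have "\<forall>i\<in>I. \<exists>X. X \<subseteq> V - B i \<and> connected_in E X \<and> 2 * card X > card V"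
    by (meson not_le)
  then obtain Xf where Xf: "\<And>i. i \<in> I \<Longrightarrow> Xf i \<subseteq> V - B i \<and> connected_in E (Xf i) \<and> 2 * card (Xf i) > card V"
    by metis
  have tr: "is_tree I F" using td by (auto simp: tree_decomposition_def)
  have ne: "Xf i \<noteq> {}" if "i \<in> I" for i using Xf[OF that] by auto
  have "\<forall>i\<in>I. \<exists>j. {i,j} \<in> F \<and> {l\<in>I. B l \<inter> Xf i \<noteq> {}} \<subseteq> side F I i j"
  proof
    fix i assume i: "i \<in> I"
    show "\<exists>j. {i,j} \<in> F \<and> {l\<in>I. B l \<inter> Xf i \<noteq> {}} \<subseteq> side F I i j"
      using td_orient[OF td _ _ ne[OF i] _ i] Xf[OF i] by auto
  qed
  then obtain f where f: "\<And>i. i \<in> I \<Longrightarrow> {i, f i} \<in> F \<and> {l\<in>I. B l \<inter> Xf i \<noteq> {}} \<subseteq> side F I i (f i)"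
    by metis
  define h where "h i = {i, f i}" for i
  have hF: "h ` I \<subseteq> F" using f h_def by auto
  have finI: "finite I" "I \<noteq> {}" "card F = card I - 1" "F \<subseteq> simple_edges I" using tr by (auto simp: is_tree_def)
  have finF: "finite F" using finI finite_simple_edges finite_subset by blast
  have "\<not> inj_on h I"
  proof
    assume "inj_on h I"
    then have "card I \<le> card F" using card_inj_on_le[OF _ hF finF] by blast
    moreover have "card I \<ge> 1" using finI by (simp add: Suc_leI card_gt_0_iff)
    ultimately show False using finI by linarith
  qed
  then obtain i i' where ii: "i \<in> I" "i' \<in> I" "i \<noteq> i'" "h i = h i'" unfolding inj_on_def by blast
  then have ii2: "i' = f i" "i = f i'" unfolding h_def by (auto simp: doubleton_eq_iff)
  have "Xf i \<inter> Xf i' \<noteq> {}"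
  proof
    assume dis: "Xf i \<inter> Xf i' = {}"
    have "Xf i \<union> Xf i' \<subseteq> V" using Xf ii by blast
    then have "card (Xf i \<union> Xf i') \<le> card V" using finV card_mono by blast
    moreover have "finite (Xf i)" "finite (Xf i')" using Xf ii finV finite_subset by (meson Diff_subset subset_trans)+
    then have "card (Xf i \<union> Xf i') = card (Xf i) + card (Xf i')" using dis card_Un_disjoint by blast
    moreover have "card V < 2 * card (Xf i)" "card V < 2 * card (Xf i')" using Xf[OF ii(1)] Xf[OF ii(2)] by auto
    ultimately show False by linarith
  qed
  then obtain v where v: "v \<in> Xf i" "v \<in> Xf i'" by blast
  then have "v \<in> V" using Xf ii by blast
  then obtain a where a: "a \<in> I" "v \<in> B a" using td unfolding tree_decomposition_def by blast
  have A1: "{l\<in>I. B l \<inter> Xf i \<noteq> {}} \<subseteq> side F I i i'" "{i,i'} \<in> F"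
    using f[OF ii(1)] unfolding ii2(1)[symmetric] by auto
  have A2: "{l\<in>I. B l \<inter> Xf i' \<noteq> {}} \<subseteq> side F I i' i"
    using f[OF ii(2)] unfolding ii2(2)[symmetric] by auto
  have "a \<in> side F I i i'" using A1(1) a v by blast
  moreover have "a \<in> side F I i' i" using A2 a v by blast
  moreover note A1(2)
  ultimately show False using sides_disjoint[OF tr, of i i'] by auto
qed

definition gv :: "('d::finite \<Rightarrow> nat) \<Rightarrow> real^'d" where
  "gv g = (\<chi> j. real (g j))"

definition pt :: "nat \<Rightarrow> 'd::finite \<Rightarrow> ('d \<Rightarrow> nat) \<Rightarrow> nat \<Rightarrow> real^'d" where
  "pt m i g t = (\<chi> j. if j = i then real (g j) + real t / real m else real (g j) + 1 / (2 * real m))"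

definition grid :: "nat \<Rightarrow> ('d::finite \<Rightarrow> nat) set" where
  "grid L = {g. \<forall>j. g j < L}"

lemma pt_nth: "pt m i g t $ j = (if j = i then real (g j) + real t / real m else real (g j) + 1 / (2 * real m))"
  by (simp add: pt_def)

lemma dist_l1: "dist (x::real^'d::finite) y \<le> (\<Sum>j\<in>UNIV. \<bar>x $ j - y $ j\<bar>)"
  using norm_le_l1_cart[of "x - y"] by (simp add: dist_norm)

lemma pt_inj:
  assumes m: "m > 0" and t: "t < m" "t' < m" and eq: "pt m i g t = pt m i' g' t'"
  shows "i = i' \<and> g = g' \<and> t = t'"
proof -
  have c: "\<And>j. pt m i g t $ j = pt m i' g' t' $ j" using eq by simp
  have ii: "i = i'"
  proof (rule ccontr)
    assume ne: "i \<noteq> i'"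
    have "real (g i) + real t / real m = real (g' i) + 1 / (2 * real m)"
      using c[of i] ne by (simp add: pt_nth)
    then have "(real (g i) + real t / real m) * (2 * real m) = (real (g' i) + 1 / (2 * real m)) * (2 * real m)"
      by simp
    moreover have "(real (g i) + real t / real m) * (2 * real m) = real (2 * m * g i + 2 * t)"
      using m by (simp add: distrib_right)
    moreover have "(real (g' i) + 1 / (2 * real m)) * (2 * real m) = real (2 * m * g' i + 1)"
      using m by (simp add: distrib_right)
    ultimately have "real (2 * m * g i + 2 * t) = real (2 * m * g' i + 1)" by simp
    then have "2 * m * g i + 2 * t = 2 * m * g' i + 1" using of_nat_eq_iff by blast
    moreover have "even (2 * m * g i + 2 * t)" by simp
    moreover have "odd (2 * m * g' i + 1)" by simp
    ultimately show False by metis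
  qed
  have gj: "g j = g' j" if "j \<noteq> i" for j
    using c[of j] that ii by (simp add: pt_nth)
  have "real (g i) + real t / real m = real (g' i) + real t' / real m"
    using c[of i] ii by (simp add: pt_nth)
  then have "(real (g i) + real t / real m) * real m = (real (g' i) + real t' / real m) * real m"
    by simp
  moreover have "(real (g i) + real t / real m) * real m = real (m * g i + t)"
    using m by (simp add: distrib_right)
  moreover have "(real (g' i) + real t' / real m) * real m = real (m * g' i + t')"
    using m by (simp add: distrib_right)
  ultimately have "real (m * g i + t) = real (m * g' i + t')" by simp
  then have e: "m * g i + t = m * g' i + t'" using of_nat_eq_iff by blast
  then have "(m * g i + t) div m = (m * g' i + t') div m" by simp
  then have gi: "g i = g' i" using t m by simp
  then have "t = t'" using e by simp
  moreover have "g = g'" using gj gi by (intro ext) metis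
  ultimately show ?thesis using ii by simp
qed

lemma sum_single: "(\<Sum>j\<in>(UNIV::'d::finite set). if j = i then (c::real) else 0) = c"
  by (simp add: sum.delta [of UNIV])

lemma link_a:
  assumes "m > 0"
  shows "dist (pt m i g t) (pt m i g (Suc t)) \<le> 1 / real m"
proof -
  have "(\<lambda>j. \<bar>pt m i g t $ j - pt m i g (Suc t) $ j\<bar>) = (\<lambda>j. if j = i then 1 / real m else 0)"
    using assms by (intro ext) (simp add: pt_nth add_divide_distrib)
  then have "(\<Sum>j\<in>UNIV. \<bar>pt m i g t $ j - pt m i g (Suc t) $ j\<bar>) = 1 / real m"
    by (simp only: sum_single)
  then show ?thesis using dist_l1[of "pt m i g t" "pt m i g (Suc t)"] by simp
qed

lemma link_b:
  assumes "m > 0"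
  shows "dist (pt m i g 0) (pt m i' g 0) \<le> 1 / real m"
proof -
  have "\<bar>pt m i g 0 $ j - pt m i' g 0 $ j\<bar> \<le> (if j = i then 1 / (2 * real m) else 0) + (if j = i' then 1 / (2 * real m) else 0)" for j
    using assms by (simp add: pt_nth)
  then have "(\<Sum>j\<in>UNIV. \<bar>pt m i g 0 $ j - pt m i' g 0 $ j\<bar>) \<le>
     (\<Sum>j\<in>UNIV. (if j = i then 1 / (2 * real m) else 0) + (if j = i' then 1 / (2 * real m) else 0))"
    by (intro sum_mono) auto
  also have "\<dots> = 1 / real m" by (simp add: sum.distrib sum_single)
  finally show ?thesis using dist_l1[of "pt m i g 0" "pt m i' g 0"] by linarith
qed

lemma link_c:
  assumes "m > 0"
  shows "dist (pt m j g (m - 1)) (pt m j (g(j := Suc (g j))) 0) \<le> 1 / real m"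
proof -
  have "(\<lambda>l. \<bar>pt m j g (m - 1) $ l - pt m j (g(j := Suc (g j))) 0 $ l\<bar>) = (\<lambda>l. if l = j then 1 / real m else 0)"
    using assms by (intro ext) (simp add: pt_nth of_nat_diff field_simps)
  then have "(\<Sum>l\<in>UNIV. \<bar>pt m j g (m - 1) $ l - pt m j (g(j := Suc (g j))) 0 $ l\<bar>) = 1 / real m"
    by (simp only: sum_single)
  then show ?thesis using dist_l1[of "pt m j g (m - 1)" "pt m j (g(j := Suc (g j))) 0"] by simp
qed

lemma star_dist:
  fixes g :: "'d::finite \<Rightarrow> nat"
  assumes "m > 0" "t < m"
  shows "dist (gv g) (pt m i g t) \<le> real CARD('d)"
proof -
  have "\<bar>gv g $ j - pt m i g t $ j\<bar> \<le> 1" for j :: 'd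
    using assms by (simp add: pt_nth gv_def)
  then have "(\<Sum>j\<in>UNIV. \<bar>gv g $ j - pt m i g t $ j\<bar>) \<le> (\<Sum>j\<in>(UNIV::'d set). 1)"
    by (intro sum_mono) auto
  then show ?thesis using dist_l1[of "gv g" "pt m i g t"] by simp
qed

lemma simple_edge_mem: "{x,y} \<in> simple_edges P \<Longrightarrow> x \<in> P \<and> y \<in> P"
proof -
  assume "{x,y} \<in> simple_edges P"
  then obtain p q where pq: "{x,y} = {p,q}" "p \<in> P" "q \<in> P" by (auto simp: simple_edges_def)
  have "x \<in> {p,q}" "y \<in> {p,q}" using pq(1) by (metis insertCI)+
  then show ?thesis using pq by auto
qed

lemma walk_in_P: "is_walk E xs \<Longrightarrow> E \<subseteq> simple_edges P \<Longrightarrow> hd xs \<in> P \<Longrightarrow> set xs \<subseteq> P"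
proof (induction E xs rule: is_walk.induct)
  case (3 E x y xs)
  then have "y \<in> P" using simple_edge_mem by (metis is_walk.simps(3) subsetD)
  then show ?case using 3 by auto
qed auto

lemma walk_len_nonneg: "0 \<le> walk_len xs"
  by (induction xs rule: walk_len.induct) auto

lemma walk_len_ge: "\<forall>w\<in>set xs. dist (hd xs) w \<le> walk_len xs"
proof (induction xs rule: walk_len.induct)
  case (3 x y xs)
  show ?case
  proof
    fix w assume w: "w \<in> set (x # y # xs)"
    show "dist (hd (x # y # xs)) w \<le> walk_len (x # y # xs)"
    proof (cases "w = x")
      case True
      then show ?thesis using walk_len_nonneg[of "x # y # xs"] by simp
    next
      case False
      then have "w \<in> set (y # xs)" using w by simp
      then have "dist y w \<le> walk_len (y # xs)" using 3 by auto
      then show ?thesis using dist_triangle[of x w y] by simp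
    qed
  qed
qed auto

lemma grid_PiE: "grid L = PiE UNIV (\<lambda>_. {..<L})"
  by (auto simp: grid_def PiE_def Pi_def extensional_def)

lemma finite_grid: "finite (grid L)"
  unfolding grid_PiE by (intro finite_PiE) auto

lemma card_grid: "card (grid L :: ('d::finite \<Rightarrow> nat) set) = L ^ CARD('d)"
  unfolding grid_PiE by (simp add: card_PiE)

lemma card_near_nat: "card {x::nat. \<bar>real x - a\<bar> < real R} \<le> 2 * R"
proof -
  define x0 where "x0 = nat \<lceil>a - real R\<rceil>"
  have "{x::nat. \<bar>real x - a\<bar> < real R} \<subseteq> {x0..<x0 + 2 * R}"
  proof
    fix x assume "x \<in> {x::nat. \<bar>real x - a\<bar> < real R}"
    then have x: "a - real R < real x" "real x < a + real R" by auto
    have "a - real R \<le> real_of_int (int x)" using x(1) by simp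
    then have "\<lceil>a - real R\<rceil> \<le> int x" by (simp only: ceiling_le_iff)
    then have "x0 \<le> x" unfolding x0_def by (simp only: nat_le_iff)
    moreover have "real x < real x0 + 2 * real R"
    proof -
      have "a - real R \<le> of_int \<lceil>a - real R\<rceil>" by (rule le_of_int_ceiling)
      moreover have "of_int \<lceil>a - real R\<rceil> \<le> real x0" unfolding x0_def by simp
      ultimately show ?thesis using x(2) by linarith
    qed
    then have "x < x0 + 2 * R" by linarith
    ultimately show "x \<in> {x0..<x0 + 2 * R}" by simp
  qed
  then show ?thesis using card_mono[of "{x0..<x0 + 2 * R}"] by fastforce
qed

lemma finite_near_nat: "finite {x::nat. \<bar>real x - a\<bar> < real R}"
proof -
  have "{x::nat. \<bar>real x - a\<bar> < real R} \<subseteq> {..nat \<lceil>a + real R\<rceil>}"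
  proof
    fix x assume "x \<in> {x::nat. \<bar>real x - a\<bar> < real R}"
    then have "real x \<le> a + real R" by auto
    moreover have "a + real R \<le> of_int \<lceil>a + real R\<rceil>" by (rule le_of_int_ceiling)
    ultimately have "real x \<le> of_int \<lceil>a + real R\<rceil>" by linarith
    then have "real_of_int (int x) \<le> of_int \<lceil>a + real R\<rceil>" by simp
    then have "int x \<le> \<lceil>a + real R\<rceil>" by (simp only: of_int_le_iff)
    then show "x \<in> {..nat \<lceil>a + real R\<rceil>}" by (simp add: le_nat_iff)
  qed
  then show ?thesis using finite_subset by blast
qed

locale geo =
  fixes P :: "(real^'d::finite) set" and E :: "(real^'d) set set" and S :: "(real^'d) set"
    and m L :: nat and \<sigma> :: "nat \<Rightarrow> 'd"
  assumes finP: "finite P" and EP: "E \<subseteq> simple_edges P" and SP: "S \<subseteq> P"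
    and sep: "\<And>X. X \<subseteq> P - S \<Longrightarrow> connected_in E X \<Longrightarrow> 2 * card X \<le> card P"
    and short: "\<And>p q. p \<in> P \<Longrightarrow> q \<in> P \<Longrightarrow> p \<noteq> q \<Longrightarrow>
        \<exists>xs. is_walk E xs \<and> hd xs = p \<and> last xs = q \<and> walk_len xs < real m * dist p q"
    and core: "\<And>i g t. g \<in> grid L \<Longrightarrow> t < m \<Longrightarrow> pt m i g t \<in> P"
    and mpos: "m > 0"
    and sig: "bij_betw \<sigma> {..<CARD('d)} UNIV"
begin

definition Rs where "Rs = (erel E (P - S))\<^sup>*"

definition good :: "('d \<Rightarrow> nat) \<Rightarrow> bool" where
  "good g \<longleftrightarrow> g \<in> grid L \<and> (\<forall>s\<in>S. real CARD('d) + 2 \<le> dist (gv g) s)"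

definition pig :: "('d \<Rightarrow> nat) \<Rightarrow> real^'d" where "pig g = pt m (\<sigma> 0) g 0"

lemma Rs_refl: "(x,x) \<in> Rs" unfolding Rs_def by simp

lemma Rs_trans: "(x,y) \<in> Rs \<Longrightarrow> (y,z) \<in> Rs \<Longrightarrow> (x,z) \<in> Rs"
  unfolding Rs_def by (rule rtrancl_trans)

lemma Rs_sym: "(x,y) \<in> Rs \<Longrightarrow> (y,x) \<in> Rs"
  unfolding Rs_def by (rule erel_rtrancl_sym)

lemma link:
  assumes p: "p \<in> P" and q: "q \<in> P" and d: "dist p q \<le> 1 / real m" and far: "\<forall>s\<in>S. 1 \<le> dist p s"
  shows "(p,q) \<in> Rs"
proof (cases "p = q")
  case True
  then show ?thesis by (simp add: Rs_refl)
next
  case False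
  then obtain xs where xs: "is_walk E xs" "hd xs = p" "last xs = q" "walk_len xs < real m * dist p q"
    using short p q by blast
  have "real m * dist p q \<le> real m * (1 / real m)" using d mpos by (intro mult_left_mono) auto
  then have wl: "walk_len xs < 1" using xs(4) mpos by simp
  have sP: "set xs \<subseteq> P" using walk_in_P[OF xs(1) EP] xs(2) p by simp
  have "w \<notin> S" if "w \<in> set xs" for w
  proof
    assume "w \<in> S"
    then have "1 \<le> dist p w" using far by auto
    moreover have "dist p w \<le> walk_len xs" using walk_len_ge[of xs] that xs(2) by auto
    ultimately show False using wl by simp
  qed
  then have "set xs \<subseteq> P - S" using sP by auto
  then have "(hd xs, last xs) \<in> (erel E (P - S))\<^sup>*" using walk_to_rtrancl xs(1) by blast
  then show ?thesis using xs unfolding Rs_def by simp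
qed

lemma star_far:
  assumes g: "good g" and t: "t < m"
  shows "\<forall>s\<in>S. 1 \<le> dist (pt m i g t) s"
proof
  fix s assume s: "s \<in> S"
  have "real CARD('d) + 2 \<le> dist (gv g) s" using g s by (auto simp: good_def)
  moreover have "dist (gv g) (pt m i g t) \<le> real CARD('d)" using star_dist mpos t by blast
  moreover have "dist (gv g) s \<le> dist (gv g) (pt m i g t) + dist (pt m i g t) s" by (rule dist_triangle)
  ultimately show "1 \<le> dist (pt m i g t) s" by linarith
qed

lemma star_P:
  assumes g: "good g" and t: "t < m"
  shows "pt m i g t \<in> P - S"
proof -
  have "pt m i g t \<in> P" using core g t by (auto simp: good_def)
  moreover have "pt m i g t \<notin> S"
  proof
    assume "pt m i g t \<in> S"
    then have "1 \<le> dist (pt m i g t) (pt m i g t)" using star_far[OF g t] by blast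
    then show False by simp
  qed
  ultimately show ?thesis by simp
qed

lemma star_line:
  assumes g: "good g"
  shows "t < m \<Longrightarrow> (pt m i g 0, pt m i g t) \<in> Rs"
proof (induction t)
  case 0
  then show ?case by (simp add: Rs_refl)
next
  case (Suc t)
  then have "(pt m i g 0, pt m i g t) \<in> Rs" by simp
  moreover have "(pt m i g t, pt m i g (Suc t)) \<in> Rs"
  proof (rule link)
    have t: "t < m" "Suc t < m" using Suc.prems by auto
    show "pt m i g t \<in> P" "pt m i g (Suc t) \<in> P" using star_P[OF g t(1)] star_P[OF g t(2)] by auto
    show "dist (pt m i g t) (pt m i g (Suc t)) \<le> 1 / real m" using link_a[OF mpos] .
    show "\<forall>s\<in>S. 1 \<le> dist (pt m i g t) s" using star_far[OF g t(1)] .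
  qed
  ultimately show ?case by (rule Rs_trans)
qed

lemma star:
  assumes g: "good g" and t: "t < m"
  shows "(pig g, pt m i g t) \<in> Rs"
proof -
  have "(pt m (\<sigma> 0) g 0, pt m i g 0) \<in> Rs"
  proof (rule link)
    show "pt m (\<sigma> 0) g 0 \<in> P" "pt m i g 0 \<in> P" using star_P[OF g mpos] by auto
    show "dist (pt m (\<sigma> 0) g 0) (pt m i g 0) \<le> 1 / real m" using link_b[OF mpos] .
    show "\<forall>s\<in>S. 1 \<le> dist (pt m (\<sigma> 0) g 0) s" using star_far[OF g mpos] .
  qed
  then show ?thesis unfolding pig_def using star_line[OF g t] Rs_trans by blast
qed

lemma pig_P: "good g \<Longrightarrow> pig g \<in> P - S"
  unfolding pig_def using star_P mpos by blast

lemma adj: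
  assumes g: "good g" and g': "good (g(j := Suc (g j)))"
  shows "(pig g, pig (g(j := Suc (g j)))) \<in> Rs"
proof -
  have m1: "m - 1 < m" using mpos by simp
  have "(pig g, pt m j g (m - 1)) \<in> Rs" using star[OF g m1] .
  moreover have "(pt m j g (m - 1), pt m j (g(j := Suc (g j))) 0) \<in> Rs"
  proof (rule link)
    show "pt m j g (m - 1) \<in> P" "pt m j (g(j := Suc (g j))) 0 \<in> P"
      using star_P[OF g m1] star_P[OF g' mpos] by auto
    show "dist (pt m j g (m - 1)) (pt m j (g(j := Suc (g j))) 0) \<le> 1 / real m" using link_c[OF mpos] .
    show "\<forall>s\<in>S. 1 \<le> dist (pt m j g (m - 1)) s" using star_far[OF g m1] .
  qed
  moreover have "(pt m j (g(j := Suc (g j))) 0, pig (g(j := Suc (g j)))) \<in> Rs"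
    using star[OF g' mpos] Rs_sym by blast
  ultimately show ?thesis using Rs_trans by blast
qed

lemma segment:
  assumes "\<forall>v. a \<le> v \<and> v \<le> b \<longrightarrow> good (u(j := v))" "a \<le> b"
  shows "(pig (u(j := a)), pig (u(j := b))) \<in> Rs"
  using assms
proof (induction b)
  case 0
  then show ?case by (simp add: Rs_refl)
next
  case (Suc b)
  show ?case
  proof (cases "a = Suc b")
    case True
    then show ?thesis by (simp add: Rs_refl)
  next
    case False
    then have ab: "a \<le> b" using Suc.prems by simp
    have "\<forall>v. a \<le> v \<and> v \<le> b \<longrightarrow> good (u(j := v))" using Suc.prems(1) by (auto simp: fun_upd_def)
    then have IH: "(pig (u(j := a)), pig (u(j := b))) \<in> Rs" using Suc.IH ab by blast
    have e: "(u(j := b))(j := Suc ((u(j := b)) j)) = u(j := Suc b)" by simp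
    have "good (u(j := b))" "good (u(j := Suc b))" using Suc.prems ab by (auto simp: fun_upd_def)
    then have "(pig (u(j := b)), pig (u(j := Suc b))) \<in> Rs" using adj[of "u(j := b)" j] e by simp
    then show ?thesis using IH Rs_trans by blast
  qed
qed

lemma segment2:
  assumes "\<forall>v. min a b \<le> v \<and> v \<le> max a b \<longrightarrow> good (u(j := v))"
  shows "(pig (u(j := a)), pig (u(j := b))) \<in> Rs"
proof (cases "a \<le> b")
  case True
  then show ?thesis using segment[of a b u j] assms by auto
next
  case False
  then have "(pig (u(j := b)), pig (u(j := a))) \<in> Rs" using segment[of b a u j] assms by auto
  then show ?thesis by (rule Rs_sym)
qed

definition wl :: "nat \<Rightarrow> ('d \<Rightarrow> nat) \<Rightarrow> ('d \<Rightarrow> nat) \<Rightarrow> ('d \<Rightarrow> nat)" where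
  "wl l g h = (\<lambda>j. if j \<in> \<sigma> ` {..<l} then h j else g j)"

definition avoid :: "('d \<Rightarrow> nat) \<Rightarrow> ('d \<Rightarrow> nat) \<Rightarrow> bool" where
  "avoid g h \<longleftrightarrow> (\<forall>l<CARD('d). \<forall>v. min (g (\<sigma> l)) (h (\<sigma> l)) \<le> v \<and> v \<le> max (g (\<sigma> l)) (h (\<sigma> l))
      \<longrightarrow> good ((wl l g h)(\<sigma> l := v)))"

lemma sig_inj: "inj_on \<sigma> {..<CARD('d)}"
  using sig by (simp add: bij_betw_def)

lemma sig_notin: "l < CARD('d) \<Longrightarrow> \<sigma> l \<notin> \<sigma> ` {..<l}"
proof
  assume l: "l < CARD('d)" and "\<sigma> l \<in> \<sigma> ` {..<l}"
  then obtain l' where l': "l' < l" "\<sigma> l' = \<sigma> l" by auto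
  then have "l' = l" using sig_inj l by (auto dest: inj_onD)
  then show False using l' by simp
qed

lemma wl_0: "wl 0 g h = g" by (simp add: wl_def)

lemma wl_D: "wl CARD('d) g h = h"
proof -
  have "\<sigma> ` {..<CARD('d)} = UNIV" using sig by (simp add: bij_betw_def)
  then show ?thesis by (simp add: wl_def)
qed

lemma wl_Suc: "wl (Suc l) g h = (wl l g h)(\<sigma> l := h (\<sigma> l))"
  by (auto simp: wl_def lessThan_Suc)

lemma wl_self: "l < CARD('d) \<Longrightarrow> (wl l g h)(\<sigma> l := g (\<sigma> l)) = wl l g h"
  using sig_notin by (auto simp: wl_def)

lemma avoid_conn:
  assumes "avoid g h"
  shows "(pig g, pig h) \<in> Rs"
proof -
  have "l \<le> CARD('d) \<Longrightarrow> (pig g, pig (wl l g h)) \<in> Rs" for l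
  proof (induction l)
    case 0
    then show ?case by (simp add: wl_0 Rs_refl)
  next
    case (Suc l)
    then have l: "l < CARD('d)" by simp
    have "(pig ((wl l g h)(\<sigma> l := g (\<sigma> l))), pig ((wl l g h)(\<sigma> l := h (\<sigma> l)))) \<in> Rs"
      using assms l unfolding avoid_def by (intro segment2) auto
    then have "(pig (wl l g h), pig (wl (Suc l) g h)) \<in> Rs" using wl_self[OF l] wl_Suc by simp
    then show ?case using Suc l Rs_trans by simp
  qed
  then show ?thesis using wl_D by (metis order_refl)
qed

definition Xr where "Xr g = {y. (pig g, y) \<in> Rs}"

lemma Xr_sub: "good g \<Longrightarrow> Xr g \<subseteq> P - S"
proof
  fix y assume g: "good g" and "y \<in> Xr g"
  then have "(pig g, y) \<in> (erel E (P - S))\<^sup>*" by (simp add: Xr_def Rs_def)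
  then show "y \<in> P - S"
  proof (induction rule: rtrancl_induct)
    case base
    then show ?case using pig_P[OF g] .
  next
    case (step y z)
    then show ?case by (auto simp: erel_def)
  qed
qed

lemma Xr_conn: "good g \<Longrightarrow> connected_in E (Xr g)"
proof -
  assume g: "good g"
  have A: "(pig g, y) \<in> (erel E (Xr g))\<^sup>*" if "y \<in> Xr g" for y
  proof -
    have "(pig g, y) \<in> (erel E (P - S))\<^sup>*" using that by (simp add: Xr_def Rs_def)
    then show ?thesis
    proof (induction rule: rtrancl_induct)
      case base
      then show ?case by simp
    next
      case (step y z)
      then have "y \<in> Xr g" "z \<in> Xr g" unfolding Xr_def Rs_def by (auto intro: rtrancl_into_rtrancl)
      then have "(y,z) \<in> erel E (Xr g)" using step by (auto simp: erel_def)
      then show ?case using step by (auto intro: rtrancl_into_rtrancl)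
    qed
  qed
  show ?thesis unfolding connected_in_iff
  proof (intro ballI)
    fix y z assume "y \<in> Xr g" "z \<in> Xr g"
    then have "(pig g, y) \<in> (erel E (Xr g))\<^sup>*" "(pig g, z) \<in> (erel E (Xr g))\<^sup>*"
      using A by blast+
    then have "(y, pig g) \<in> (erel E (Xr g))\<^sup>*" "(pig g, z) \<in> (erel E (Xr g))\<^sup>*"
      using erel_rtrancl_sym by auto
    then show "(y,z) \<in> (erel E (Xr g))\<^sup>*" by (rule rtrancl_trans)
  qed
qed

definition "Gd = {g. good g}"
definition "Ag g = {h \<in> Gd. avoid g h}"

lemma Gd_grid: "Gd \<subseteq> grid L" by (auto simp: Gd_def good_def)

lemma finite_Gd: "finite Gd" using Gd_grid finite_grid finite_subset by blast

lemma Ag_card: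
  assumes g: "good g"
  shows "2 * (CARD('d) * card (Ag g) * m) \<le> card P"
proof -
  define f :: "'d \<times> ('d \<Rightarrow> nat) \<times> nat \<Rightarrow> real^'d" where "f = (\<lambda>(i, h, t). pt m i h t)"
  have sub: "f ` (UNIV \<times> Ag g \<times> {..<m}) \<subseteq> Xr g"
  proof
    fix y assume "y \<in> f ` (UNIV \<times> Ag g \<times> {..<m})"
    then obtain i h t where y: "y = pt m i h t" "h \<in> Ag g" "t < m" by (auto simp: f_def)
    then have h: "good h" "avoid g h" by (auto simp: Ag_def Gd_def)
    have "(pig g, pig h) \<in> Rs" using avoid_conn h(2) .
    moreover have "(pig h, pt m i h t) \<in> Rs" using star h(1) y(3) .
    ultimately show "y \<in> Xr g" using y Rs_trans unfolding Xr_def by blast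
  qed
  have inj: "inj_on f (UNIV \<times> Ag g \<times> {..<m})"
  proof (rule inj_onI)
    fix x y assume xy: "x \<in> UNIV \<times> Ag g \<times> {..<m}" "y \<in> UNIV \<times> Ag g \<times> {..<m}" "f x = f y"
    obtain i1 h1 t1 where x: "x = (i1, h1, t1)" by (cases x) auto
    obtain i2 h2 t2 where y: "y = (i2, h2, t2)" by (cases y) auto
    have "t1 < m" "t2 < m" "pt m i1 h1 t1 = pt m i2 h2 t2" using xy x y by (auto simp: f_def)
    then show "x = y" using pt_inj[OF mpos] x y by blast
  qed
  have finAg: "finite (Ag g)" using finite_Gd by (auto simp: Ag_def)
  have finX: "finite (Xr g)" using Xr_sub[OF g] finP finite_subset by blast
  have "card ((UNIV::'d set) \<times> Ag g \<times> {..<m}) = CARD('d) * (card (Ag g) * m)"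
    by (simp add: card_cartesian_product)
  then have "CARD('d) * card (Ag g) * m = card (f ` (UNIV \<times> Ag g \<times> {..<m}))"
    using card_image[OF inj] by simp
  also have "\<dots> \<le> card (Xr g)" using card_mono[OF finX sub] .
  finally have "CARD('d) * card (Ag g) * m \<le> card (Xr g)" .
  moreover have "2 * card (Xr g) \<le> card P" using sep Xr_sub[OF g] Xr_conn[OF g] by blast
  ultimately show ?thesis by linarith
qed

end

context geo begin

definition "Bad = grid L - Gd"
definition "Hs = {(g,h). g \<in> Gd \<and> h \<in> Gd \<and> \<not> avoid g h}"
definition "Qs r l = {(g,h). g \<in> grid L \<and> h \<in> grid L \<and> (\<forall>j. j \<notin> \<sigma> ` {..l} \<longrightarrow> g j = r j) \<and> (\<forall>j\<in>\<sigma> ` {..<l}. h j = r j)}"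
definition "Fx r A = {g \<in> grid L. \<forall>j. j \<notin> A \<longrightarrow> g j = r j}"

lemma Fx_card: "card (Fx r A) \<le> L ^ card A"
proof -
  have inj: "inj_on (\<lambda>g. restrict g A) (Fx r A)"
  proof (rule inj_onI)
    fix g g' assume gg: "g \<in> Fx r A" "g' \<in> Fx r A" and eq: "restrict g A = restrict g' A"
    show "g = g'"
    proof
      fix j show "g j = g' j"
      proof (cases "j \<in> A")
        case True
        then show ?thesis using fun_cong[OF eq, of j] by simp
      next
        case False
        then show ?thesis using gg by (simp add: Fx_def)
      qed
    qed
  qed
  have sub: "(\<lambda>g. restrict g A) ` Fx r A \<subseteq> PiE A (\<lambda>_. {..<L})"
    by (auto simp: Fx_def grid_def)
  have fin: "finite (PiE A (\<lambda>_. {..<L}))" by (intro finite_PiE) auto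
  have "card (PiE A (\<lambda>_. {..<L})) = L ^ card A" using finite[of A] by (simp add: card_PiE)
  then show ?thesis using card_inj_on_le[OF inj sub fin] by simp
qed

lemma finite_Fx: "finite (Fx r A)"
proof -
  have "Fx r A \<subseteq> grid L" by (auto simp: Fx_def)
  then show ?thesis using finite_grid finite_subset by blast
qed

lemma Qs_card:
  assumes l: "l < CARD('d)"
  shows "card (Qs r l) \<le> L ^ (CARD('d) + 1)"
proof -
  have sub: "Qs r l \<subseteq> Fx r (\<sigma> ` {..l}) \<times> Fx r (- \<sigma> ` {..<l})"
    by (auto simp: Qs_def Fx_def)
  have fin: "finite (Fx r (\<sigma> ` {..l}) \<times> Fx r (- \<sigma> ` {..<l}))" using finite_Fx by auto
  have s1: "{..l} \<subseteq> {..<CARD('d)}" "{..<l} \<subseteq> {..<CARD('d)}" using l by auto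
  have c1: "card (\<sigma> ` {..l}) = Suc l" using card_image[OF inj_on_subset[OF sig_inj s1(1)]] by simp
  have c0: "card (\<sigma> ` {..<l}) = l" using card_image[OF inj_on_subset[OF sig_inj s1(2)]] by simp
  have "- \<sigma> ` {..<l} = UNIV - \<sigma> ` {..<l}" by auto
  then have c2: "card (- \<sigma> ` {..<l}) = CARD('d) - l"
    using card_Diff_subset[of "\<sigma> ` {..<l}" UNIV] c0 by simp
  have "card (Qs r l) \<le> card (Fx r (\<sigma> ` {..l}) \<times> Fx r (- \<sigma> ` {..<l}))" by (rule card_mono[OF fin sub])
  also have "\<dots> = card (Fx r (\<sigma> ` {..l})) * card (Fx r (- \<sigma> ` {..<l}))" by (rule card_cartesian_product)
  also have "\<dots> \<le> L ^ Suc l * L ^ (CARD('d) - l)"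
    using Fx_card[of r "\<sigma> ` {..l}"] Fx_card[of r "- \<sigma> ` {..<l}"] c1 c2 by (intro mult_le_mono) auto
  also have "\<dots> = L ^ (CARD('d) + 1)" using l by (simp add: power_add[symmetric])
  finally show ?thesis .
qed

lemma finite_Qs: "finite (Qs r l)"
proof -
  have "Qs r l \<subseteq> grid L \<times> grid L" by (auto simp: Qs_def)
  then show ?thesis using finite_grid finite_subset by blast
qed

lemma Hs_sub: "Hs \<subseteq> (\<Union>r\<in>Bad. \<Union>l\<in>{..<CARD('d)}. Qs r l)"
proof
  fix x assume "x \<in> Hs"
  then obtain g h where x: "x = (g,h)" "g \<in> Gd" "h \<in> Gd" "\<not> avoid g h" by (auto simp: Hs_def)
  then obtain l v where lv: "l < CARD('d)" "min (g (\<sigma> l)) (h (\<sigma> l)) \<le> v" "v \<le> max (g (\<sigma> l)) (h (\<sigma> l))"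
      "\<not> good ((wl l g h)(\<sigma> l := v))"
    unfolding avoid_def by blast
  define r where "r = (wl l g h)(\<sigma> l := v)"
  have gg: "g \<in> grid L" "h \<in> grid L" using x Gd_grid by auto
  have "r \<in> grid L" unfolding grid_def mem_Collect_eq
  proof (intro allI)
    fix j
    show "r j < L"
    proof (cases "j = \<sigma> l")
      case True
      have "g (\<sigma> l) < L" "h (\<sigma> l) < L" using gg by (auto simp: grid_def)
      then have "v < L" using lv(3) by (simp add: max_def split: if_splits)
      then show ?thesis using True by (simp add: r_def)
    next
      case False
      then show ?thesis using gg by (simp add: r_def wl_def grid_def)
    qed
  qed
  then have "r \<in> Bad" using lv(4) by (auto simp: Bad_def Gd_def r_def)
  moreover have "(g,h) \<in> Qs r l"
  proof -
    have "g j = r j" if "j \<notin> \<sigma> ` {..l}" for j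
    proof -
      have "j \<noteq> \<sigma> l" "j \<notin> \<sigma> ` {..<l}" using that by auto
      then show ?thesis by (simp add: r_def wl_def)
    qed
    moreover have "h j = r j" if "j \<in> \<sigma> ` {..<l}" for j
    proof -
      have "j \<noteq> \<sigma> l"
      proof
        assume "j = \<sigma> l"
        then show False using that sig_notin[OF lv(1)] by simp
      qed
      then show ?thesis using that by (simp add: r_def wl_def)
    qed
    ultimately show ?thesis using gg unfolding Qs_def by blast
  qed
  ultimately show "x \<in> (\<Union>r\<in>Bad. \<Union>l\<in>{..<CARD('d)}. Qs r l)" using lv(1) x by blast
qed

lemma finite_Bad: "finite Bad"
  using finite_grid by (auto simp: Bad_def)

lemma Hs_card: "card Hs \<le> card Bad * CARD('d) * L ^ (CARD('d) + 1)"
proof -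
  have fin: "finite (\<Union>r\<in>Bad. \<Union>l\<in>{..<CARD('d)}. Qs r l)"
    using finite_Bad finite_Qs by auto
  have "card Hs \<le> card (\<Union>r\<in>Bad. \<Union>l\<in>{..<CARD('d)}. Qs r l)" by (rule card_mono[OF fin Hs_sub])
  also have "\<dots> \<le> (\<Sum>r\<in>Bad. card (\<Union>l\<in>{..<CARD('d)}. Qs r l))" by (rule card_UN_le[OF finite_Bad])
  also have "\<dots> \<le> (\<Sum>r\<in>Bad. \<Sum>l\<in>{..<CARD('d)}. card (Qs r l))"
    by (intro sum_mono card_UN_le) auto
  also have "\<dots> \<le> (\<Sum>r\<in>Bad. \<Sum>l\<in>{..<CARD('d)}. L ^ (CARD('d) + 1))"
    by (intro sum_mono Qs_card) auto
  also have "\<dots> = card Bad * CARD('d) * L ^ (CARD('d) + 1)" by simp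
  finally show ?thesis .
qed

lemma count:
  "2 * CARD('d) * m * (card Gd * card Gd) \<le> card Gd * card P + 2 * CARD('d) * m * card Hs"
proof -
  have sub: "Gd \<times> Gd \<subseteq> Sigma Gd Ag \<union> Hs" by (auto simp: Ag_def Hs_def)
  have finAg: "\<forall>g\<in>Gd. finite (Ag g)" using finite_Gd by (auto simp: Ag_def)
  have finH: "finite Hs"
  proof -
    have "Hs \<subseteq> Gd \<times> Gd" by (auto simp: Hs_def)
    then show ?thesis using finite_Gd finite_subset by blast
  qed
  have finS: "finite (Sigma Gd Ag)" using finite_Gd finAg by auto
  have "card Gd * card Gd = card (Gd \<times> Gd)" by (simp add: card_cartesian_product)
  also have "\<dots> \<le> card (Sigma Gd Ag \<union> Hs)" using finS finH sub by (intro card_mono) auto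
  also have "\<dots> \<le> card (Sigma Gd Ag) + card Hs" by (rule card_Un_le)
  also have "card (Sigma Gd Ag) = (\<Sum>g\<in>Gd. card (Ag g))" using finite_Gd finAg by (rule card_SigmaI)
  finally have A: "card Gd * card Gd \<le> (\<Sum>g\<in>Gd. card (Ag g)) + card Hs" .
  have "2 * CARD('d) * m * (\<Sum>g\<in>Gd. card (Ag g)) = (\<Sum>g\<in>Gd. 2 * (CARD('d) * card (Ag g) * m))"
    by (simp add: sum_distrib_left algebra_simps)
  also have "\<dots> \<le> (\<Sum>g\<in>Gd. card P)" by (intro sum_mono) (use Ag_card in \<open>auto simp: Gd_def\<close>)
  also have "\<dots> = card Gd * card P" by simp
  finally have B: "2 * CARD('d) * m * (\<Sum>g\<in>Gd. card (Ag g)) \<le> card Gd * card P" .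
  have "2 * CARD('d) * m * (card Gd * card Gd) \<le> 2 * CARD('d) * m * ((\<Sum>g\<in>Gd. card (Ag g)) + card Hs)"
    using A by (rule mult_le_mono2)
  also have "\<dots> = 2 * CARD('d) * m * (\<Sum>g\<in>Gd. card (Ag g)) + 2 * CARD('d) * m * card Hs"
    by (simp add: distrib_left)
  finally show ?thesis using B by linarith
qed

lemma Bad_card: "card Bad \<le> card S * (2 * CARD('d) + 4) ^ CARD('d)"
proof -
  define R where "R = CARD('d) + 2"
  define Near where "Near s = PiE UNIV (\<lambda>j. {x::nat. \<bar>real x - s $ j\<bar> < real R})" for s :: "real^'d"
  have sub: "Bad \<subseteq> (\<Union>s\<in>S. Near s)"
  proof
    fix g assume "g \<in> Bad"
    then have g: "g \<in> grid L" "\<not> good g" by (auto simp: Bad_def Gd_def)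
    then obtain s where s: "s \<in> S" "dist (gv g) s < real CARD('d) + 2" by (auto simp: good_def not_le)
    have "\<bar>real (g j) - s $ j\<bar> < real R" for j
    proof -
      have "\<bar>(gv g - s) $ j\<bar> \<le> norm (gv g - s)" by (rule component_le_norm_cart)
      then show ?thesis using s(2) by (simp add: gv_def dist_norm R_def)
    qed
    then have "g \<in> Near s" by (auto simp: Near_def PiE_def Pi_def extensional_def)
    then show "g \<in> (\<Union>s\<in>S. Near s)" using s by blast
  qed
  have cN: "card (Near s) \<le> (2 * CARD('d) + 4) ^ CARD('d)" for s
  proof -
    have "card (Near s) = (\<Prod>j\<in>UNIV. card {x::nat. \<bar>real x - s $ j\<bar> < real R})" by (simp add: Near_def card_PiE)
    also have "\<dots> \<le> (\<Prod>j\<in>(UNIV::'d set). 2 * R)" by (intro prod_mono) (simp add: card_near_nat)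
    also have "\<dots> = (2 * R) ^ CARD('d)" by simp
    also have "2 * R = 2 * CARD('d) + 4" by (simp add: R_def)
    finally show ?thesis .
  qed
  have finN: "finite (Near s)" for s by (simp add: Near_def finite_PiE finite_near_nat)
  have finS: "finite S" using SP finP finite_subset by blast
  have "card Bad \<le> card (\<Union>s\<in>S. Near s)" using card_mono[OF _ sub] finS finN by auto
  also have "\<dots> \<le> (\<Sum>s\<in>S. card (Near s))" by (rule card_UN_le[OF finS])
  also have "\<dots> \<le> (\<Sum>s\<in>S. (2 * CARD('d) + 4) ^ CARD('d))" by (intro sum_mono cN)
  also have "\<dots> = card S * (2 * CARD('d) + 4) ^ CARD('d)" by simp
  finally show ?thesis .
qed

lemma Gd_Bad: "card Gd + card Bad = L ^ CARD('d)"
proof -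
  have "card Bad = card (grid L :: ('d \<Rightarrow> nat) set) - card Gd" unfolding Bad_def
    using finite_Gd Gd_grid by (simp add: card_Diff_subset)
  moreover have "card Gd \<le> card (grid L :: ('d \<Rightarrow> nat) set)" by (rule card_mono[OF finite_grid Gd_grid])
  ultimately show ?thesis using card_grid[of L] by (metis (no_types) add_diff_inverse_nat not_less)
qed

theorem main_ineq:
  "2 * CARD('d) * m * (card Gd * card Gd) \<le> card Gd * card P
     + 2 * CARD('d) * m * (card S * (2 * CARD('d) + 4) ^ CARD('d) * CARD('d) * L ^ (CARD('d) + 1))"
proof -
  have "card Hs \<le> card S * (2 * CARD('d) + 4) ^ CARD('d) * CARD('d) * L ^ (CARD('d) + 1)"
    using Hs_card Bad_card by (meson le_trans mult_le_mono1)
  then show ?thesis using count by (meson add_le_mono le_trans mult_le_mono2 order_refl)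
qed

end

lemma dil_short:
  fixes P :: "'a::metric_space set"
  assumes dil: "dilation P E < ereal T" and pq: "p \<in> P" "q \<in> P" "p \<noteq> q"
  shows "\<exists>xs. is_walk E xs \<and> hd xs = p \<and> last xs = q \<and> walk_len xs < T * dist p q"
proof -
  have d: "dist p q > 0" using pq by simp
  have "graph_dist E p q / ereal (dist p q) \<le> dilation P E"
    unfolding dilation_def using SUP_upper[of "(p,q)" "{(p, q). p \<in> P \<and> q \<in> P \<and> p \<noteq> q}"
      "\<lambda>pq. graph_dist E (fst pq) (snd pq) / ereal (dist (fst pq) (snd pq))"] pq by simp
  then have lt: "graph_dist E p q / ereal (dist p q) < ereal T" using dil by simp
  have "graph_dist E p q < ereal (T * dist p q)"
  proof (cases "graph_dist E p q" rule: ereal_cases)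
    case (real r)
    then have "ereal (r / dist p q) < ereal T" using lt d by simp
    then have "r / dist p q < T" by simp
    then have "r < T * dist p q" using d by (simp add: divide_less_eq)
    then show ?thesis using real by simp
  next
    case PInf
    then have "graph_dist E p q / ereal (dist p q) = \<infinity>" using d by simp
    then show ?thesis using lt by simp
  next
    case MInf
    then show ?thesis by simp
  qed
  then obtain xs where "xs \<in> {xs. is_walk E xs \<and> hd xs = p \<and> last xs = q}" "ereal (walk_len xs) < ereal (T * dist p q)"
    unfolding graph_dist_def INF_less_iff by blast
  then show ?thesis by auto
qed

lemma td_trivial:
  assumes "E \<subseteq> simple_edges P"
  shows "has_td_width P E (card P)"
proof -
  have tr: "is_tree {0} {}" unfolding is_tree_def by (simp add: connected_in_iff)
  have "\<forall>e\<in>E. e \<subseteq> P" using assms by (auto simp: simple_edges_def)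
  then have "tree_decomposition P E {0} {} (\<lambda>_. P)"
    unfolding tree_decomposition_def using tr by (auto simp: connected_in_iff)
  then show ?thesis unfolding has_td_width_def by fastforce
qed

lemma tw_has:
  assumes "E \<subseteq> simple_edges P" "treewidth P E = k"
  shows "has_td_width P E k"
proof -
  have "\<exists>k. has_td_width P E k" using td_trivial[OF assms(1)] by blast
  then have "has_td_width P E (treewidth P E)" unfolding treewidth_def by (rule LeastI_ex)
  then show ?thesis using assms(2) by simp
qed

lemma trivial_case:
  assumes n: "n \<ge> 2" and T: "T \<le> 1"
  shows "\<exists>P :: (real^'d::finite) set. finite P \<and> card P = n \<and>
           (\<forall>E. geometric_graph P E \<and> treewidth P E = k \<longrightarrow> dilation P E \<ge> ereal T)"
proof -
  define f :: "nat \<Rightarrow> real^'d" where "f t = (\<chi> j. real t)" for t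
  have inj: "inj_on f {..<n}"
  proof (rule inj_onI)
    fix x y assume "f x = f y"
    then have "f x $ undefined = f y $ undefined" by simp
    then show "x = y" by (simp add: f_def)
  qed
  define P where "P = f ` {..<n}"
  have cP: "card P = n" unfolding P_def using card_image[OF inj] by simp
  have "dilation P E \<ge> ereal T" if "geometric_graph P E" for E
  proof (rule ccontr)
    assume "\<not> dilation P E \<ge> ereal T"
    then have dil: "dilation P E < ereal T" by simp
    have pq: "f 0 \<in> P" "f 1 \<in> P" using n unfolding P_def by auto
    have "f 0 \<noteq> f 1"
    proof
      assume "f 0 = f 1"
      then have "(0::nat) = 1" using inj_onD[OF inj] n by fastforce
      then show False by simp
    qed
    note pq = pq this
    obtain xs where xs: "is_walk E xs" "hd xs = f 0" "last xs = f 1" "walk_len xs < T * dist (f 0) (f 1)"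
      using dil_short[OF dil pq] by blast
    have "last xs \<in> set xs" using walk_nonempty[OF xs(1)] by simp
    then have "dist (f 0) (f 1) \<le> walk_len xs" using walk_len_ge[of xs] xs by auto
    moreover have "T * dist (f 0) (f 1) \<le> dist (f 0) (f 1)" using T mult_right_mono[of T 1 "dist (f 0) (f 1)"] by simp
    ultimately show False using xs(4) by simp
  qed
  then show ?thesis using cP unfolding P_def by blast
qed

lemma arith_contra:
  fixes G N n m B Dr :: real
  assumes m: "m \<ge> 10" and N: "N > 0" and G: "G \<ge> 39/40 * N" and n: "n \<le> Dr * N * (m+1)" and Dr: "Dr > 0"
    and ineq: "2 * Dr * m * G^2 \<le> G * n + 2 * Dr * m * B" and B: "B \<le> N^2/20"
  shows False
proof -
  have Gp: "G > 0" using G N by simp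
  have "G * n \<le> G * (Dr * N * (m+1))" using n Gp by (simp add: mult_left_mono)
  moreover have "m + 1 \<le> 11/10 * m" using m by simp
  then have "G * (Dr * N * (m+1)) \<le> G * (Dr * N * (11/10 * m))" using Gp Dr N by (simp add: mult_left_mono)
  moreover have "2 * Dr * m * B \<le> 2 * Dr * m * (N^2/20)" using B Dr m by (simp add: mult_left_mono)
  ultimately have "2 * Dr * m * G^2 \<le> G * (Dr * N * (11/10 * m)) + 2 * Dr * m * (N^2/20)"
    using ineq by linarith
  then have "(Dr * m) * (2 * G^2) \<le> (Dr * m) * (11/10 * G * N + N^2 / 10)"
    by (simp add: algebra_simps)
  then have A: "2 * G^2 \<le> 11/10 * G * N + N^2 / 10" using Dr m by (simp add: mult_le_cancel_left_pos)
  have "G * (2 * G - 11/10 * N) \<ge> (39/40 * N) * (2 * G - 11/10 * N)"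
    using G N by (intro mult_right_mono) auto
  moreover have "(39/40 * N) * (2 * G - 11/10 * N) \<ge> (39/40 * N) * (2 * (39/40 * N) - 11/10 * N)"
    using G N by (intro mult_left_mono) auto
  ultimately have "G * (2 * G - 11/10 * N) \<ge> (39/40 * N) * (2 * (39/40 * N) - 11/10 * N)" by linarith
  then have "2 * G^2 - 11/10 * G * N \<ge> 663/800 * N^2" by (simp add: algebra_simps power2_eq_square)
  moreover have "N^2 > 0" using N by simp
  ultimately show False using A by linarith
qed

lemma pt_nonneg: "m > 0 \<Longrightarrow> 0 \<le> pt m i g t $ j"
  by (simp add: pt_nth)

lemma main_case:
  fixes n k m L :: nat and T :: real
  assumes D2: "CARD('d::finite) \<ge> 2" and m10: "m \<ge> 10" and L1: "L \<ge> 1"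
    and nlo: "CARD('d) * L ^ CARD('d) * m \<le> n" and nhi: "n < CARD('d) * L ^ CARD('d) * (m + 1)"
    and Tm: "T \<le> real m"
    and kL: "40 * (2 * CARD('d) + 4) ^ CARD('d) * CARD('d) * (k + 1) \<le> 2 * L ^ (CARD('d) - 1)"
  shows "\<exists>P :: (real^'d) set. finite P \<and> card P = n \<and>
           (\<forall>E. geometric_graph P E \<and> treewidth P E = k \<longrightarrow> dilation P E \<ge> ereal T)"
proof -
  define D where "D = CARD('d)"
  have mpos: "m > 0" using m10 by simp
  define f :: "'d \<times> ('d \<Rightarrow> nat) \<times> nat \<Rightarrow> real^'d" where "f = (\<lambda>(i, g, t). pt m i g t)"
  define core where "core = f ` (UNIV \<times> grid L \<times> {..<m})"
  define r where "r = n - D * L ^ D * m"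
  define ex :: "nat \<Rightarrow> real^'d" where "ex j = (\<chi> _. - (1 + real j))" for j
  define P where "P = core \<union> ex ` {..<r}"
  have inj: "inj_on f (UNIV \<times> grid L \<times> {..<m})"
  proof (rule inj_onI)
    fix x y assume xy: "x \<in> UNIV \<times> grid L \<times> {..<m}" "y \<in> UNIV \<times> grid L \<times> {..<m}" "f x = f y"
    obtain i1 h1 t1 where x: "x = (i1, h1, t1)" by (cases x) auto
    obtain i2 h2 t2 where y: "y = (i2, h2, t2)" by (cases y) auto
    have "t1 < m" "t2 < m" "pt m i1 h1 t1 = pt m i2 h2 t2" using xy x y by (auto simp: f_def)
    then show "x = y" using pt_inj[OF mpos] x y by blast
  qed
  have ccore: "card core = D * L ^ D * m"
  proof -
    have "card ((UNIV::'d set) \<times> (grid L :: ('d \<Rightarrow> nat) set) \<times> {..<m}) = D * (L ^ D * m)"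
      by (simp add: card_cartesian_product card_grid D_def)
    then show ?thesis unfolding core_def using card_image[OF inj] by simp
  qed
  have injx: "inj_on ex {..<r}"
  proof (rule inj_onI)
    fix x y assume "ex x = ex y"
    then have "ex x $ undefined = ex y $ undefined" by simp
    then show "x = y" by (simp add: ex_def)
  qed
  have disj: "core \<inter> ex ` {..<r} = {}"
  proof -
    have "0 \<le> z $ undefined" if "z \<in> core" for z
      using that pt_nonneg[OF mpos] by (auto simp: core_def f_def)
    moreover have "z $ undefined < 0" if "z \<in> ex ` {..<r}" for z
      using that by (auto simp: ex_def)
    ultimately show ?thesis by force
  qed
  have fincore: "finite core" unfolding core_def
    using finite_grid[of L] by (intro finite_imageI finite_cartesian_product) auto
  have finP: "finite P" unfolding P_def using fincore by auto
  have cP: "card P = n"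
  proof -
    have "card P = card core + card (ex ` {..<r})" unfolding P_def
      using card_Un_disjoint[OF fincore _ disj] by simp
    also have "\<dots> = D * L ^ D * m + r" using ccore card_image[OF injx] by simp
    also have "\<dots> = n" using nlo unfolding r_def D_def by simp
    finally show ?thesis .
  qed
  have coreP: "pt m i g t \<in> P" if "g \<in> grid L" "t < m" for i g t
  proof -
    have "f (i, g, t) \<in> core" unfolding core_def using that by blast
    then show ?thesis unfolding P_def f_def by simp
  qed
  have "dilation P E \<ge> ereal T" if GE: "geometric_graph P E" "treewidth P E = k" for E
  proof (rule ccontr)
    assume "\<not> dilation P E \<ge> ereal T"
    then have dil: "dilation P E < ereal T" by simp
    have EP: "E \<subseteq> simple_edges P" using GE(1) by (simp add: geometric_graph_def)
    obtain I F B where td: "tree_decomposition P E I F B" and bags: "\<forall>i\<in>I. card (B i) \<le> k + 1"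
      using tw_has[OF EP GE(2)] unfolding has_td_width_def by blast
    obtain i where i: "i \<in> I" and sepi: "\<forall>X. X \<subseteq> P - B i \<and> connected_in E X \<longrightarrow> 2 * card X \<le> card P"
      using td_separator[OF td finP] by blast
    define S where "S = B i"
    have SP: "S \<subseteq> P" using td i unfolding S_def tree_decomposition_def by blast
    have cS: "card S \<le> k + 1" using bags i S_def by blast
    have short: "\<exists>xs. is_walk E xs \<and> hd xs = p \<and> last xs = q \<and> walk_len xs < real m * dist p q"
      if pqs: "p \<in> P" "q \<in> P" "p \<noteq> q" for p q
    proof -
      obtain xs where xs: "is_walk E xs" "hd xs = p" "last xs = q" "walk_len xs < T * dist p q"
        using dil_short[OF dil pqs] by blast
      have "T * dist p q \<le> real m * dist p q" using Tm by (simp add: mult_right_mono)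
      then show ?thesis using xs by (intro exI[of _ xs]) auto
    qed
    obtain \<sigma>0 where s0: "bij_betw \<sigma>0 {0..<card (UNIV::'d set)} (UNIV::'d set)"
      using ex_bij_betw_nat_finite[of "UNIV::'d set"] by auto
    then have s0': "bij_betw \<sigma>0 {..<CARD('d)} (UNIV::'d set)" by (simp add: atLeast0LessThan)
    interpret G: geo P E S m L \<sigma>0
    proof
      show "finite P" by (rule finP)
      show "E \<subseteq> simple_edges P" by (rule EP)
      show "S \<subseteq> P" by (rule SP)
      show "\<And>X. X \<subseteq> P - S \<Longrightarrow> connected_in E X \<Longrightarrow> 2 * card X \<le> card P" using sepi S_def by blast
      show "\<And>p q. p \<in> P \<Longrightarrow> q \<in> P \<Longrightarrow> p \<noteq> q \<Longrightarrow>
        \<exists>xs. is_walk E xs \<and> hd xs = p \<and> last xs = q \<and> walk_len xs < real m * dist p q" by (rule short)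
      show "\<And>i g t. g \<in> grid L \<Longrightarrow> t < m \<Longrightarrow> pt m i g t \<in> P" by (rule coreP)
      show "m > 0" by (rule mpos)
      show "bij_betw \<sigma>0 {..<CARD('d)} UNIV" by (rule s0')
    qed
    define K where "K = (2 * D + 4) ^ D"
    define Gn where "Gn = card G.Gd"
    define bn where "bn = card G.Bad"
    define Bn where "Bn = card S * K * D * L ^ (D + 1)"
    have mi: "2 * D * m * (Gn * Gn) \<le> Gn * n + 2 * D * m * Bn"
      using G.main_ineq cP unfolding Gn_def Bn_def K_def D_def by simp
    have gb: "Gn + bn = L ^ D" using G.Gd_Bad unfolding Gn_def bn_def D_def .
    have bc: "bn \<le> card S * K" using G.Bad_card unfolding bn_def K_def D_def .
    have D2': "D \<ge> 2" using D2 D_def by simp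
    have kL': "40 * K * D * (k + 1) \<le> 2 * L ^ (D - 1)" using kL unfolding K_def D_def by simp
    have "40 * K * 2 * (k + 1) \<le> 40 * K * D * (k + 1)" using D2'
      by (intro mult_le_mono1 mult_le_mono2)
    moreover have "40 * K * 2 * (k + 1) = 2 * (40 * ((k + 1) * K))" by (simp add: algebra_simps)
    ultimately have k1: "40 * ((k + 1) * K) \<le> L ^ (D - 1)" using kL' by linarith
    have LD: "L ^ (D - 1) \<le> L ^ D" using L1 by (intro power_increasing) auto
    have b40: "40 * bn \<le> L ^ D"
    proof -
      have "bn \<le> (k + 1) * K" using bc cS by (metis mult_le_mono1 order_trans)
      then show ?thesis using k1 LD by linarith
    qed
    have B20: "20 * Bn \<le> (L ^ D) ^ 2"
    proof -
      have "40 * K * D * (k + 1) = 2 * (20 * (K * D * (k + 1)))" by (simp add: algebra_simps)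
      then have "20 * (K * D * (k + 1)) \<le> L ^ (D - 1)" using kL' by linarith
      then have "20 * (K * D * (k + 1)) * L ^ (D + 1) \<le> L ^ (D - 1) * L ^ (D + 1)" by (rule mult_le_mono1)
      moreover have "L ^ (D - 1) * L ^ (D + 1) = (L ^ D) ^ 2"
      proof -
        have "L ^ (D - 1) * L ^ (D + 1) = L ^ ((D - 1) + (D + 1))" by (simp add: power_add)
        also have "(D - 1) + (D + 1) = D * 2" using D2' by simp
        finally show ?thesis by (simp add: power_mult)
      qed
      moreover have "20 * Bn \<le> 20 * (K * D * (k + 1)) * L ^ (D + 1)"
      proof -
        have "20 * Bn = (20 * K * D * L ^ (D + 1)) * card S" by (simp add: Bn_def algebra_simps)
        also have "\<dots> \<le> (20 * K * D * L ^ (D + 1)) * (k + 1)" using cS by (rule mult_le_mono2)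
        also have "\<dots> = 20 * (K * D * (k + 1)) * L ^ (D + 1)" by (simp add: algebra_simps)
        finally show ?thesis .
      qed
      ultimately show ?thesis by linarith
    qed
    show False
    proof (rule arith_contra)
      show "real m \<ge> 10" using m10 by simp
      show "real (L ^ D) > 0" using L1 by simp
      show "real Gn \<ge> 39/40 * real (L ^ D)"
      proof -
        have "real Gn + real bn = real (L ^ D)" using gb by (metis of_nat_add)
        moreover have "40 * real bn \<le> real (L ^ D)" using b40 by (metis of_nat_le_iff of_nat_mult of_nat_numeral)
        ultimately show ?thesis by linarith
      qed
      show "real n \<le> real D * real (L ^ D) * (real m + 1)"
      proof -
        have "n \<le> D * L ^ D * (m + 1)" using nhi D_def by simp
        then have "real n \<le> real (D * L ^ D * (m + 1))" by (simp only: of_nat_le_iff)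
        then show ?thesis by (simp add: algebra_simps)
      qed
      show "real D > 0" using D2' by simp
      show "2 * real D * real m * (real Gn)^2 \<le> real Gn * real n + 2 * real D * real m * real Bn"
      proof -
        have "real (2 * D * m * (Gn * Gn)) \<le> real (Gn * n + 2 * D * m * Bn)" using mi by (simp only: of_nat_le_iff)
        then show ?thesis by (simp add: power2_eq_square)
      qed
      show "real Bn \<le> (real (L ^ D))^2 / 20"
      proof -
        have "real (20 * Bn) \<le> real ((L ^ D) ^ 2)" using B20 by (simp only: of_nat_le_iff)
        then show ?thesis by simp
      qed
    qed
  qed
  then show ?thesis using finP cP by blast
qed

lemma div_mul_aux: "(W::real) \<noteq> 0 \<Longrightarrow> (x / W) * W = x"
  by simp

lemma params:
  fixes D k n A :: nat and T :: real
  assumes D2: "D \<ge> 2" and k1: "k \<ge> 1" and T1: "T > 1" and A1: "A \<ge> 1"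
    and Tdef: "T = real n / (20 * (real D * 2 ^ D * real A powr (real D / (real D - 1))) * real k powr (real D / (real D - 1)))"
  shows "\<exists>m L. m \<ge> 10 \<and> L \<ge> 1 \<and> D * L ^ D * m \<le> n \<and> n < D * L ^ D * (m + 1) \<and> T \<le> real m
           \<and> A * (k + 1) \<le> 2 * L ^ (D - 1)"
proof -
  define dr where "dr = real D - 1"
  define e where "e = real D / dr"
  have dr: "dr > 0" "real (D - 1) = dr" using D2 by (auto simp: dr_def of_nat_diff)
  define y where "y = real A * real k"
  have y1: "y \<ge> 1" using A1 k1 unfolding y_def by (metis mult_mono' of_nat_0_le_iff of_nat_1 of_nat_le_iff mult_1_right)
  define x where "x = y powr (1 / dr)"
  have x1: "x \<ge> 1" unfolding x_def using y1 dr by (intro ge_one_powr_ge_zero) auto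
  define L where "L = nat \<lceil>x\<rceil>"
  have Lx: "real L \<ge> x" unfolding L_def using x1 by linarith
  have Lx2: "real L \<le> 2 * x"
  proof -
    have "real_of_int \<lceil>x\<rceil> \<le> x + 1" by (rule of_int_ceiling_le_add_one)
    moreover have "real L = real_of_int \<lceil>x\<rceil>" unfolding L_def using x1 by simp
    ultimately show ?thesis using x1 by linarith
  qed
  have L1: "L \<ge> 1" using Lx x1 by simp
  have xD1: "x ^ (D - 1) = y"
  proof -
    have "x ^ (D - 1) = x powr real (D - 1)" using x1 by (simp add: powr_realpow)
    also have "\<dots> = y powr (1 / dr * dr)" unfolding x_def dr(2) by (simp add: powr_powr)
    also have "\<dots> = y" using dr y1 by simp
    finally show ?thesis .
  qed
  have xD: "x ^ D = real A powr e * real k powr e"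
  proof -
    have "x ^ D = x powr real D" using x1 by (simp add: powr_realpow)
    also have "\<dots> = y powr (1 / dr * real D)" unfolding x_def by (simp add: powr_powr)
    also have "1 / dr * real D = e" unfolding e_def by simp
    also have "y powr e = real A powr e * real k powr e" unfolding y_def by (simp add: powr_mult)
    finally show ?thesis .
  qed
  have "real L ^ (D - 1) \<ge> y" using xD1 Lx x1 by (metis power_mono order_trans zero_le_one)
  then have "real (A * k) \<le> real (L ^ (D - 1))" unfolding y_def by simp
  then have Ak: "A * k \<le> L ^ (D - 1)" by (simp only: of_nat_le_iff)
  have kL: "A * (k + 1) \<le> 2 * L ^ (D - 1)"
  proof -
    have "A * (k + 1) \<le> A * (2 * k)" using k1 by (intro mult_le_mono2) simp
    moreover have "A * (2 * k) = 2 * (A * k)" by simp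
    ultimately show ?thesis using Ak by linarith
  qed
  define q where "q = D * L ^ D"
  have qpos: "q > 0" using D2 L1 unfolding q_def by simp
  define Z where "Z = real D * 2 ^ D * real A powr e"
  have kpos: "real k powr e > 0" using k1 by simp
  have Zpos: "Z > 0" using D2 A1 unfolding Z_def by simp
  have "real L ^ D \<le> (2 * x) ^ D" using Lx2 by (intro power_mono) auto
  also have "\<dots> = 2 ^ D * (real A powr e * real k powr e)" by (simp add: power_mult_distrib xD)
  finally have "real q \<le> real D * (2 ^ D * (real A powr e * real k powr e))"
    unfolding q_def by (simp add: mult_left_mono)
  then have qZ: "real q \<le> Z * real k powr e" unfolding Z_def by (simp add: algebra_simps)
  have Wp: "20 * (Z * real k powr e) > 0" using Zpos kpos by simp
  have T': "T = real n / (20 * (Z * real k powr e))"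
    unfolding Z_def e_def dr_def using Tdef by (simp only: mult.assoc)
  have "T * (20 * (Z * real k powr e)) = real n" unfolding T' using Wp div_mul_aux by (metis less_irrefl)
  then have Tn: "real n = 20 * T * (Z * real k powr e)" by (simp add: algebra_simps)
  define m where "m = n div q"
  have nlo: "q * m \<le> n" unfolding m_def by simp
  have nhi: "n < q * (m + 1)"
  proof -
    have "n = q * m + n mod q" unfolding m_def by simp
    moreover have "n mod q < q" using qpos by simp
    ultimately show ?thesis by (simp add: algebra_simps)
  qed
  have "20 * T * real q \<le> 20 * T * (Z * real k powr e)" using qZ T1 by simp
  then have "20 * T * real q \<le> real n" using Tn by simp
  also have "real n < real q * (real m + 1)" using nhi by (metis of_nat_1 of_nat_add of_nat_less_iff of_nat_mult)
  finally have "(20 * T) * real q < (real m + 1) * real q" by (simp add: algebra_simps)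
  then have mT: "20 * T < real m + 1" using qpos by simp
  have m10: "m \<ge> 10" using mT T1 by linarith
  have Tm: "T \<le> real m" using mT T1 by linarith
  show ?thesis using m10 L1 nlo nhi Tm kL unfolding q_def by blast
qed

theorem theorem2:
  assumes "CARD('d::finite) \<ge> 2"
  shows "\<exists>c>0. \<forall>n k :: nat. n \<ge> 1 \<and> k \<ge> 1 \<and>
           real k \<le> real n powr ((real CARD('d) - 1) / real CARD('d))
                      * (5 * real CARD('d)) powr (1 / real CARD('d) - 2) \<longrightarrow>
           (\<exists>P :: (real^'d) set. finite P \<and> card P = n \<and>
              (\<forall>E. geometric_graph P E \<and> treewidth P E = k \<longrightarrow>
                  dilation P E \<ge> ereal (c * real n / real k powr (real CARD('d) / (real CARD('d) - 1)))))"
proof -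
  define D where "D = CARD('d)"
  have D2: "D \<ge> 2" using assms D_def by simp
  define A :: nat where "A = 40 * (2 * D + 4) ^ D * D"
  have A1: "A \<ge> 1" using D2 unfolding A_def by simp
  define e where "e = real D / (real D - 1)"
  define Z where "Z = real D * 2 ^ D * real A powr e"
  have Zpos: "Z > 0" using D2 A1 unfolding Z_def by simp
  define c where "c = 1 / (20 * Z)"
  have cpos: "c > 0" using Zpos unfolding c_def by simp
  have main: "\<exists>P :: (real^'d) set. finite P \<and> card P = n \<and>
              (\<forall>E. geometric_graph P E \<and> treewidth P E = k \<longrightarrow>
                  dilation P E \<ge> ereal (c * real n / real k powr (real CARD('d) / (real CARD('d) - 1))))"
    if H: "n \<ge> 1" "k \<ge> 1" "real k \<le> real n powr ((real CARD('d) - 1) / real CARD('d))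
                      * (5 * real CARD('d)) powr (1 / real CARD('d) - 2)" for n k :: nat
  proof -
    define T where "T = c * real n / real k powr (real CARD('d) / (real CARD('d) - 1))"
    have "\<exists>P :: (real^'d) set. finite P \<and> card P = n \<and>
              (\<forall>E. geometric_graph P E \<and> treewidth P E = k \<longrightarrow> dilation P E \<ge> ereal T)"
    proof (cases "T \<le> 1")
      case True
      have n2: "n \<ge> 2"
      proof (rule ccontr)
        assume "\<not> n \<ge> 2"
        then have n1: "n = 1" using H(1) by simp
        have "(5 * real CARD('d)) powr (1 / real CARD('d) - 2) < 1"
        proof (rule powr_less_one)
          show "1 < 5 * real CARD('d)" using D2 D_def by simp
          have "1 / real CARD('d) \<le> 1" using D2 D_def by simp
          then show "1 / real CARD('d) - 2 < 0" by linarith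
        qed
        then have "real k < 1" using H(3) n1 by simp
        then show False using H(2) by simp
      qed
      show ?thesis using trivial_case[OF n2 True] by blast
    next
      case False
      then have T1: "T > 1" by simp
      have Tdef: "T = real n / (20 * (real D * 2 ^ D * real A powr (real D / (real D - 1))) * real k powr (real D / (real D - 1)))"
        unfolding T_def c_def Z_def e_def D_def by simp
      obtain m L where mL: "m \<ge> 10" "L \<ge> 1" "D * L ^ D * m \<le> n" "n < D * L ^ D * (m + 1)" "T \<le> real m"
          "A * (k + 1) \<le> 2 * L ^ (D - 1)"
        using params[OF D2 H(2) T1 A1 Tdef] by blast
      have kL: "40 * (2 * CARD('d) + 4) ^ CARD('d) * CARD('d) * (k + 1) \<le> 2 * L ^ (CARD('d) - 1)"
        using mL(6) unfolding A_def D_def .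
      show ?thesis
        using main_case[OF assms mL(1) mL(2) _ _ mL(5) kL] mL(3,4) unfolding D_def by blast
    qed
    then show ?thesis unfolding T_def .
  qed
  show ?thesis using cpos main by blast
qed

end
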